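(* In the limit $n\to\infty$ with $k,l$ and $\xi=m/n$ fixed, the distribution $P_{n,n\xi,k,l}$ satisfies $P_{n,n\xi,k,l}=P_{R|\xi;k,l}+O(1/n)$, where $P_{R|\xi;k,l}:=B_{\xi,k-l}*B_{1-\xi,l}$. The limit distribution $P_{R|\xi;k,l}$ is a discrete probability distribution on $\{0,1,\dots,k\}$, with expectation $(k-l)\xi+l(1-\xi)$ and variance $k\xi(1-\xi)$.
   Context: Let $n,m,k,l$ be non-negative integers with $m,k,l\le n$ and $k-l,\ m-l,\ n-m-k+l\ge0$. On $(\mathbb{C}^2)^{\otimes n}$ let $\mathsf{P}_{(n-x,x)}$ be the projector onto the isotypic component $\mathcal{U}_{(n-x,x)}\boxtimes\mathcal{V}_{(n-x,x)}$ in the $\mathrm{SU}(2)$–$\mathfrak{S}_n$ Schur–Weyl decomposition ($\mathcal{V}_{(n-x,x)}$ the $\mathfrak{S}_n$-irrep of shape $(n-x,x)$). With $M=m-l$, $N=n-m-k+l$, let $|\Xi_{n,m|k,l}\rangle=|1\rangle^{\otimes l}\otimes|0\rangle^{\otimes(k-l)}\otimes|\Xi_{N+M,M}\rangle$, where $|\Xi_{N+M,M}\rangle$ is the normalized symmetric (Dicke) state on $N+M$ qubits with $M$ excitations. $P_{n,m,k,l}$ is the distribution on $\{0,\dots,\lfloor n/2\rfloor\}$ with pmf $p(x)=\langle\Xi_{n,m|k,l}|\mathsf{P}_{(n-x,x)}|\Xi_{n,m|k,l}\rangle$. $B_{\xi,j}$ denotes the binomial distribution on $\{0,1,\dots,j\}$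 with pmf $x\mapsto\binom{j}{x}\xi^x(1-\xi)^{j-x}$ ($0\le\xi\le1$, $j\in\mathbb{N}$), and $*$ is convolution of distributions. *)

theory Defs
  imports "HOL-Probability.Probability"
begin

text \<open>Vectors of (C^2)^{\<otimes>n} (all amplitudes below are real, so we work over the reals)
  are functions on bit strings of length n; True stands for |1>, False for |0>.\<close>

type_synonym qstate = "bool list \<Rightarrow> real"

definition basis_strings :: "nat \<Rightarrow> bool list set" where
  "basis_strings n = {bs. length bs = n}"

definition inner_q :: "nat \<Rightarrow> qstate \<Rightarrow> qstate \<Rightarrow> real" where
  "inner_q n \<phi> \<psi> = (\<Sum>bs\<in>basis_strings n. \<phi> bs * \<psi> bs)"

definition swap_op :: "nat \<Rightarrow> nat \<Rightarrow> qstate \<Rightarrow> qstate" where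
  "swap_op i j \<psi> = (\<lambda>bs. \<psi> (bs[i := bs ! j, j := bs ! i]))"

definition transp_sum :: "nat \<Rightarrow> qstate \<Rightarrow> qstate" where
  "transp_sum n \<psi> = (\<lambda>bs. \<Sum>(i,j)\<in>{(i,j). i < j \<and> j < n}. swap_op i j \<psi> bs)"

text \<open>Scalar by which the sum of transpositions acts on the S_n irrep of shape (n-x,x):
  the content sum of the Young diagram (n-x,x).\<close>
definition content_sum :: "nat \<Rightarrow> nat \<Rightarrow> real" where
  "content_sum n x = (\<Sum>c<n-x. real c) + (\<Sum>c<x. real c - 1)"

text \<open>Projector onto the isotypic component U_(n-x,x) \<boxtimes> V_(n-x,x): spectral projector
  of the central element transp_sum, given by Lagrange interpolation over the
  (pairwise distinct) content sums of the shapes (n-y,y), y = 0..n div 2.\<close>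
definition isotypic_proj :: "nat \<Rightarrow> nat \<Rightarrow> qstate \<Rightarrow> qstate" where
  "isotypic_proj n x \<psi> =
     foldr (\<lambda>y \<phi>. (\<lambda>bs. (transp_sum n \<phi> bs - content_sum n y * \<phi> bs)
                         / (content_sum n x - content_sum n y)))
           (filter (\<lambda>y. y \<noteq> x) [0..<Suc (n div 2)]) \<psi>"

definition dicke :: "nat \<Rightarrow> nat \<Rightarrow> qstate" where
  "dicke L M = (\<lambda>bs. if length bs = L \<and> count_list bs True = M
                     then 1 / sqrt (real (L choose M)) else 0)"

text \<open>|Xi_{n,m|k,l}> = |1>^{\<otimes>l} \<otimes> |0>^{\<otimes>(k-l)} \<otimes> |Xi_{N+M,M}>, M = m-l, N = n-m-k+l.\<close>
definition Xi :: "nat \<Rightarrow> nat \<Rightarrow> nat \<Rightarrow> nat \<Rightarrow> qstate" where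
  "Xi n m k l = (\<lambda>bs. if length bs = n \<and> take l bs = replicate l True
                        \<and> take (k - l) (drop l bs) = replicate (k - l) False
                      then dicke (n - k) (m - l) (drop k bs) else 0)"

definition P_dist :: "nat \<Rightarrow> nat \<Rightarrow> nat \<Rightarrow> nat \<Rightarrow> nat \<Rightarrow> real" where
  "P_dist n m k l x = (if x \<le> n div 2
      then inner_q n (Xi n m k l) (isotypic_proj n x (Xi n m k l)) else 0)"

text \<open>P_{R|xi;k,l} = B_{xi,k-l} * B_{1-xi,l} (convolution = law of the sum of independent variables).\<close>
definition P_R :: "real \<Rightarrow> nat \<Rightarrow> nat \<Rightarrow> nat pmf" where
  "P_R \<xi> k l = map_pmf (\<lambda>(a, b). a + b)
                 (pair_pmf (binomial_pmf (k - l) \<xi>) (binomial_pmf l (1 - \<xi>)))"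

end

theory Submission
  imports Defs
begin

fun beta :: "real \<Rightarrow> bool \<Rightarrow> real" where
  "beta \<xi> True = 1 - \<xi>" | "beta \<xi> False = \<xi>"

primrec LC :: "real \<Rightarrow> bool list \<Rightarrow> nat pmf" where
  "LC \<xi> [] = return_pmf 0"
| "LC \<xi> (b#a) = map_pmf (\<lambda>(y,c). y + (if c then 1 else 0)) (pair_pmf (LC \<xi> a) (bernoulli_pmf (beta \<xi> b)))"

lemma beta_range: "0 \<le> \<xi> \<Longrightarrow> \<xi> \<le> 1 \<Longrightarrow> beta \<xi> b \<in> {0..1}"
  by (cases b) auto

lemma LC_replicate:
  assumes "0 \<le> \<xi>" "\<xi> \<le> 1"
  shows "LC \<xi> (replicate j b @ a) = map_pmf (\<lambda>(x,y). x+y) (pair_pmf (LC \<xi> a) (binomial_pmf j (beta \<xi> b)))"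
proof (induction j)
  case 0
  then show ?case using beta_range[OF assms]
    by (simp add: binomial_pmf_0 map_pmf_def pair_pmf_def bind_return_pmf bind_return_pmf' bind_assoc_pmf)
next
  case (Suc j)
  show ?case using beta_range[OF assms]
    apply (simp add: Suc binomial_pmf_Suc map_pmf_def pair_pmf_def bind_return_pmf bind_return_pmf' bind_assoc_pmf)
    apply (rule bind_pmf_cong, simp)
    apply (subst bind_commute_pmf)
    apply (rule bind_pmf_cong, simp)
    apply (rule bind_pmf_cong, simp)
    apply simp
    done
qed

lemma P_R_LC:
  assumes "0 \<le> \<xi>" "\<xi> \<le> 1"
  shows "P_R \<xi> k l = LC \<xi> (replicate l True @ replicate (k-l) False)"
proof -
  have "LC \<xi> (replicate (k-l) False) = binomial_pmf (k-l) \<xi>"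
    using LC_replicate[OF assms, of "k-l" False "[]"]
    by (simp add: map_pmf_def pair_pmf_def bind_return_pmf bind_return_pmf' bind_assoc_pmf)
  then show ?thesis unfolding P_R_def using LC_replicate[OF assms, of l True "replicate (k-l) False"]
    by simp
qed

lemma pmf_LC_Cons:
  assumes "0 \<le> \<xi>" "\<xi> \<le> 1"
  shows "pmf (LC \<xi> (b#a)) y = (1 - beta \<xi> b) * pmf (LC \<xi> a) y
          + (if y > 0 then beta \<xi> b * pmf (LC \<xi> a) (y - 1) else 0)"
proof -
  have br: "beta \<xi> b \<in> {0..1}" using beta_range[OF assms] .
  have eq: "LC \<xi> (b#a) = bind_pmf (bernoulli_pmf (beta \<xi> b)) (\<lambda>c. map_pmf (\<lambda>z. z + (if c then 1 else 0)) (LC \<xi> a))"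
    by (simp add: map_pmf_def pair_pmf_def bind_return_pmf bind_return_pmf' bind_assoc_pmf bind_commute_pmf[of "LC \<xi> a"])
  have s: "pmf (map_pmf Suc M) y = (if y > 0 then pmf M (y - 1) else 0)" for M :: "nat pmf"
  proof (cases y)
    case 0 then show ?thesis by (auto simp: pmf_eq_0_set_pmf)
  next
    case (Suc y') then show ?thesis using pmf_map_inj'[of Suc M y'] by simp
  qed
  show ?thesis unfolding eq pmf_bind using br s[of "LC \<xi> a"]
    by (simp add: integral_bernoulli_pmf algebra_simps)
qed

lemma LC_zero: "0 \<le> \<xi> \<Longrightarrow> \<xi> \<le> 1 \<Longrightarrow> length a < y \<Longrightarrow> pmf (LC \<xi> a) y = 0"
proof (induction a arbitrary: y)
  case Nil then show ?case by simp
next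
  case (Cons b a) then show ?case by (simp add: pmf_LC_Cons del: LC.simps)
qed

lemma LC_sum_Cons:
  assumes "0 \<le> \<xi>" "\<xi> \<le> 1"
  shows "(\<Sum>y\<le>Suc (length a). pmf (LC \<xi> (b#a)) y * f y) =
     (1 - beta \<xi> b) * (\<Sum>y\<le>length a. pmf (LC \<xi> a) y * f y)
     + beta \<xi> b * (\<Sum>y\<le>length a. pmf (LC \<xi> a) y * f (Suc y))"
proof -
  let ?p = "pmf (LC \<xi> a)" and ?t = "length a" and ?c = "beta \<xi> b"
  have z: "?p (Suc ?t) = 0" using LC_zero[OF assms] by simp
  have "(\<Sum>y\<le>Suc ?t. pmf (LC \<xi> (b#a)) y * f y) =
      (\<Sum>y\<le>Suc ?t. (1 - ?c) * (?p y * f y) + (if y > 0 then ?c * ?p (y - 1) * f y else 0))"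
    by (rule sum.cong[OF refl]) (simp add: pmf_LC_Cons[OF assms] algebra_simps del: LC.simps)
  also have "\<dots> = (\<Sum>y\<le>Suc ?t. (1 - ?c) * (?p y * f y)) + (\<Sum>y\<le>Suc ?t. (if y > 0 then ?c * ?p (y - 1) * f y else 0))"
    by (rule sum.distrib)
  also have "(\<Sum>y\<le>Suc ?t. (1 - ?c) * (?p y * f y)) = (1 - ?c) * (\<Sum>y\<le>?t. ?p y * f y)"
    by (simp add: sum_distrib_left z)
  also have "(\<Sum>y\<le>Suc ?t. (if y > 0 then ?c * ?p (y - 1) * f y else 0)) = ?c * (\<Sum>y\<le>?t. ?p y * f (Suc y))"
    by (subst sum.atMost_Suc_shift) (simp add: sum_distrib_left algebra_simps)
  finally show ?thesis .
qed

definition mu :: "real \<Rightarrow> bool list \<Rightarrow> real" where "mu \<xi> a = (\<Sum>b\<leftarrow>a. beta \<xi> b)"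
definition va :: "real \<Rightarrow> bool list \<Rightarrow> real" where "va \<xi> a = (\<Sum>b\<leftarrow>a. beta \<xi> b * (1 - beta \<xi> b))"

lemma LC_moments:
  assumes "0 \<le> \<xi>" "\<xi> \<le> 1"
  shows "(\<Sum>y\<le>length a. pmf (LC \<xi> a) y) = 1 \<and>
         (\<Sum>y\<le>length a. pmf (LC \<xi> a) y * real y) = mu \<xi> a \<and>
         (\<Sum>y\<le>length a. pmf (LC \<xi> a) y * (real y)^2) = (mu \<xi> a)^2 + va \<xi> a"
proof (induction a)
  case Nil then show ?case by (simp add: mu_def va_def)
next
  case (Cons b a)
  let ?p = "pmf (LC \<xi> a)" and ?q = "pmf (LC \<xi> (b#a))" and ?t = "length a" and ?c = "beta \<xi> b"
  have l: "length (b#a) = Suc ?t" by simp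
  have A: "(\<Sum>y\<le>Suc ?t. ?q y * 1) = (1 - ?c) * (\<Sum>y\<le>?t. ?p y * 1) + ?c * (\<Sum>y\<le>?t. ?p y * 1)"
    by (rule LC_sum_Cons[OF assms])
  have B: "(\<Sum>y\<le>Suc ?t. ?q y * real y) = (1 - ?c) * (\<Sum>y\<le>?t. ?p y * real y) + ?c * (\<Sum>y\<le>?t. ?p y * real (Suc y))"
    by (rule LC_sum_Cons[OF assms])
  have C: "(\<Sum>y\<le>Suc ?t. ?q y * (real y)^2) = (1 - ?c) * (\<Sum>y\<le>?t. ?p y * (real y)^2) + ?c * (\<Sum>y\<le>?t. ?p y * (real (Suc y))^2)"
    by (rule LC_sum_Cons[OF assms])
  have B2: "(\<Sum>y\<le>?t. ?p y * real (Suc y)) = (\<Sum>y\<le>?t. ?p y * real y) + (\<Sum>y\<le>?t. ?p y)"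
    by (simp add: sum.distrib[symmetric] algebra_simps)
  have C2: "(\<Sum>y\<le>?t. ?p y * (real (Suc y))^2) = (\<Sum>y\<le>?t. ?p y * (real y)^2) + 2 * (\<Sum>y\<le>?t. ?p y * real y) + (\<Sum>y\<le>?t. ?p y)"
    by (simp add: sum.distrib[symmetric] sum_distrib_left algebra_simps power2_eq_square)
  have m: "mu \<xi> (b#a) = ?c + mu \<xi> a" "va \<xi> (b#a) = ?c * (1 - ?c) + va \<xi> a" by (simp_all add: mu_def va_def)
  show ?case unfolding l using A B C B2 C2 Cons.IH unfolding m
    by (simp add: power2_eq_square algebra_simps del: sum.atMost_Suc LC.simps)
qed

lemma expectation_LC:
  assumes "0 \<le> \<xi>" "\<xi> \<le> 1"
  shows "measure_pmf.expectation (LC \<xi> a) f = (\<Sum>y\<le>length a. pmf (LC \<xi> a) y * f y)"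
  apply (subst integral_measure_pmf[where A = "{..length a}"])
    apply (auto simp: set_pmf_eq mult.commute)
  by (metis LC_zero assms not_le)

lemma P_R_facts:
  assumes "0 \<le> \<xi>" "\<xi> \<le> 1" "l \<le> k"
  shows "set_pmf (P_R \<xi> k l) \<subseteq> {0..k}
       \<and> measure_pmf.expectation (P_R \<xi> k l) real = real (k - l) * \<xi> + real l * (1 - \<xi>)
       \<and> measure_pmf.variance (P_R \<xi> k l) real = real k * \<xi> * (1 - \<xi>)"
proof -
  define a where "a = replicate l True @ replicate (k-l) False"
  have la: "length a = k" using assms(3) by (simp add: a_def)
  have PR: "P_R \<xi> k l = LC \<xi> a" unfolding a_def by (rule P_R_LC[OF assms(1,2)])
  have mu: "mu \<xi> a = real (k - l) * \<xi> + real l * (1 - \<xi>)"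
    by (simp add: mu_def a_def sum_list_replicate)
  have va: "va \<xi> a = real k * \<xi> * (1 - \<xi>)"
    using assms(3) by (simp add: va_def a_def sum_list_replicate of_nat_diff algebra_simps)
  note mom = LC_moments[OF assms(1,2), of a]
  have E: "measure_pmf.expectation (LC \<xi> a) real = mu \<xi> a"
    using mom by (simp add: expectation_LC[OF assms(1,2)] la)
  have V: "measure_pmf.variance (LC \<xi> a) real = va \<xi> a"
  proof -
    have "measure_pmf.variance (LC \<xi> a) real = (\<Sum>y\<le>length a. pmf (LC \<xi> a) y * (real y - mu \<xi> a)^2)"
      unfolding E by (simp add: expectation_LC[OF assms(1,2)])
    also have "\<dots> = (\<Sum>y\<le>length a. pmf (LC \<xi> a) y * (real y)^2) - 2 * mu \<xi> a * (\<Sum>y\<le>length a. pmf (LC \<xi> a) y * real y)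
                    + (mu \<xi> a)^2 * (\<Sum>y\<le>length a. pmf (LC \<xi> a) y)"
      by (simp add: power2_eq_square algebra_simps sum.distrib sum_subtractf sum_distrib_left)
    also have "\<dots> = va \<xi> a" using mom by (simp add: power2_eq_square)
    finally show ?thesis .
  qed
  have S: "set_pmf (LC \<xi> a) \<subseteq> {0..k}"
    using LC_zero[OF assms(1,2), of a] la by (auto simp: set_pmf_eq) (meson not_le)
  show ?thesis using S E V mu va PR by simp
qed


definition prepend :: "bool \<Rightarrow> qstate \<Rightarrow> qstate" where
  "prepend b \<phi> = (\<lambda>bs. case bs of [] \<Rightarrow> 0 | c#rest \<Rightarrow> if c = b then \<phi> rest else 0)"

definition Xop :: "bool \<Rightarrow> qstate \<Rightarrow> qstate" where
  "Xop b \<phi> = (\<lambda>s. \<Sum>j\<in>{j. j < length s \<and> s!j = b}. \<phi> (s[j := \<not>b]))"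

definition pairs :: "nat \<Rightarrow> (nat \<times> nat) set" where
  "pairs n = {(i,j). i < j \<and> j < n}"

lemma transp_sum_pairs: "transp_sum n \<psi> bs = (\<Sum>(i,j)\<in>pairs n. swap_op i j \<psi> bs)"
  by (simp add: transp_sum_def pairs_def)

lemma finite_pairs[simp]: "finite (pairs n)"
  by (rule finite_subset[of _ "{..<n} \<times> {..<n}"]) (auto simp: pairs_def)

lemma pair_sum: "(\<Sum>(i,j)\<in>pairs n. F i j) = (\<Sum>j<n. \<Sum>i<j. F i j)"
proof -
  have "(\<Sum>(i,j)\<in>pairs n. F i j) = (\<Sum>(j,i)\<in>Sigma {..<n} (\<lambda>j. {..<j}). F i j)"
    by (rule sum.reindex_bij_witness[of _ "\<lambda>(j,i). (i,j)" "\<lambda>(i,j). (j,i)"]) (auto simp: pairs_def)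
  also have "\<dots> = (\<Sum>j<n. \<Sum>i<j. F i j)"
    by (subst sum.Sigma) auto
  finally show ?thesis .
qed

lemma pair_sum_Suc: "(\<Sum>(i,j)\<in>pairs (Suc n). F i j) = (\<Sum>j<n. F 0 (Suc j)) + (\<Sum>(i,j)\<in>pairs n. F (Suc i) (Suc j))"
  unfolding pair_sum
  by (simp add: sum.lessThan_Suc_shift sum.distrib del: sum.lessThan_Suc)

lemma count_card: "count_list xs b = card {j. j < length xs \<and> xs!j = b}"
  by (simp add: count_list_eq_length_filter length_filter_conv_card eq_commute)

lemma T_linear: "transp_sum n (\<lambda>s. a * f s + c * g s) bs = a * transp_sum n f bs + c * transp_sum n g bs"
  by (simp add: transp_sum_def swap_op_def sum.distrib sum_distrib_left case_prod_beta)

lemma T_zero: "transp_sum n (\<lambda>s. 0) bs = 0"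
  by (simp add: transp_sum_def swap_op_def)

lemma T_cong: "(\<And>s. length s = length bs \<Longrightarrow> f s = g s) \<Longrightarrow> transp_sum n f bs = transp_sum n g bs"
  by (simp add: transp_sum_def swap_op_def)

lemma T_prepend:
  assumes "length rest = n"
  shows "transp_sum (Suc n) (prepend b \<phi>) (c#rest) =
     (if c = b then transp_sum n \<phi> rest + real (count_list rest b) * \<phi> rest else Xop b \<phi> rest)"
proof -
  have s1: "swap_op 0 (Suc j) (prepend b \<phi>) (c#rest) = (if rest!j = b then \<phi> (rest[j := c]) else 0)" for j
    by (simp add: swap_op_def prepend_def)
  have s2: "swap_op (Suc i) (Suc j) (prepend b \<phi>) (c#rest) = (if c = b then swap_op i j \<phi> rest else 0)" for i j
    by (simp add: swap_op_def prepend_def)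
  have A: "(\<Sum>j<n. (if rest!j = b then \<phi> (rest[j := c]) else 0)) = (\<Sum>j\<in>{j. j < length rest \<and> rest!j = b}. \<phi> (rest[j := c]))"
    using assms by (simp add: sum.If_cases Collect_conj_eq lessThan_def Int_commute)
  have B: "(\<Sum>(i,j)\<in>pairs n. (if c = b then swap_op i j \<phi> rest else 0)) = (if c = b then transp_sum n \<phi> rest else 0)"
    by (simp add: transp_sum_pairs)
  have "transp_sum (Suc n) (prepend b \<phi>) (c#rest) = (\<Sum>j\<in>{j. j < length rest \<and> rest!j = b}. \<phi> (rest[j := c]))
          + (if c = b then transp_sum n \<phi> rest else 0)"
    unfolding transp_sum_pairs pair_sum_Suc[where F = "\<lambda>i j. swap_op i j (prepend b \<phi>) (c#rest)"] s1 s2 A B ..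
  moreover have "c = b \<Longrightarrow> (\<Sum>j\<in>{j. j < length rest \<and> rest!j = b}. \<phi> (rest[j := c])) = real (count_list rest b) * \<phi> rest"
  proof -
    assume "c = b"
    have "(\<Sum>j\<in>{j. j < length rest \<and> rest!j = b}. \<phi> (rest[j := c])) = (\<Sum>j\<in>{j. j < length rest \<and> rest!j = b}. \<phi> rest)"
    proof (intro sum.cong refl)
      fix j assume "j \<in> {j. j < length rest \<and> rest!j = b}"
      then have "rest!j = c" using \<open>c = b\<close> by simp
      then have "rest[j := c] = rest" using list_update_id[of rest j] by simp
      then show "\<phi> (rest[j := c]) = \<phi> rest" by simp
    qed
    then show ?thesis by (simp add: count_card)
  qed
  moreover have "c \<noteq> b \<Longrightarrow> (\<Sum>j\<in>{j. j < length rest \<and> rest!j = b}. \<phi> (rest[j := c])) = Xop b \<phi> rest"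
    by (simp add: Xop_def)
  ultimately show ?thesis by auto
qed

definition tau :: "nat \<Rightarrow> nat \<Rightarrow> nat \<Rightarrow> nat" where
  "tau i j p = (if p = i then j else if p = j then i else p)"

lemma swap_update:
  assumes "i < length s" "j < length s" "q < length s"
  shows "(s[i := s!j, j := s!i])[tau i j q := v] = (s[q := v])[i := (s[q := v])!j, j := (s[q := v])!i]"
  using assms by (intro nth_equalityI) (auto simp: tau_def nth_list_update)

lemma swap_nth_tau:
  assumes "i < length s" "j < length s" "q < length s"
  shows "(s[i := s!j, j := s!i]) ! (tau i j q) = s ! q"
  using assms by (auto simp: tau_def nth_list_update)

lemma swap_Xop:
  assumes "i < length s" "j < length s"
  shows "swap_op i j (Xop b \<phi>) s = Xop b (swap_op i j \<phi>) s"
proof -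
  let ?s' = "s[i := s!j, j := s!i]"
  have "swap_op i j (Xop b \<phi>) s = (\<Sum>p\<in>{p. p < length ?s' \<and> ?s'!p = b}. \<phi> (?s'[p := \<not>b]))"
    by (simp add: swap_op_def Xop_def)
  also have "\<dots> = (\<Sum>q\<in>{q. q < length s \<and> s!q = b}. \<phi> (?s'[tau i j q := \<not>b]))"
    by (rule sum.reindex_bij_witness[of _ "tau i j" "tau i j"])
       (use assms in \<open>auto simp: tau_def nth_list_update split: if_splits\<close>)
  also have "\<dots> = (\<Sum>q\<in>{q. q < length s \<and> s!q = b}. swap_op i j \<phi> (s[q := \<not>b]))"
    by (intro sum.cong refl) (simp add: swap_op_def swap_update assms)
  also have "\<dots> = Xop b (swap_op i j \<phi>) s" by (simp add: Xop_def)
  finally show ?thesis .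
qed

lemma Xop_sum: "finite A \<Longrightarrow> Xop b (\<lambda>s. \<Sum>a\<in>A. f a s) s = (\<Sum>a\<in>A. Xop b (f a) s)"
  by (simp add: Xop_def sum.swap[of _ A])

lemma T_Xop:
  assumes "length s = n"
  shows "transp_sum n (Xop b \<phi>) s = Xop b (transp_sum n \<phi>) s"
proof -
  have "transp_sum n (Xop b \<phi>) s = (\<Sum>(i,j)\<in>pairs n. Xop b (swap_op i j \<phi>) s)"
    unfolding transp_sum_pairs
    by (intro sum.cong refl) (use assms in \<open>auto simp: pairs_def swap_Xop\<close>)
  also have "\<dots> = Xop b (transp_sum n \<phi>) s"
    unfolding transp_sum_pairs[abs_def]
    by (subst Xop_sum) (auto simp: case_prod_beta)
  finally show ?thesis .
qed

lemma sum_real_lessThan: "(\<Sum>j<n. real j) = real n * (real n - 1) / 2"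
  by (induction n) (auto simp: field_simps)

lemma card_pairs: "real (card (pairs n)) = real n * (real n - 1) / 2"
proof -
  have "real (card (pairs n)) = (\<Sum>(i,j)\<in>pairs n. 1)" by simp
  also have "\<dots> = (\<Sum>j<n. real j)" by (subst pair_sum) simp
  finally show ?thesis by (simp add: sum_real_lessThan)
qed

lemma swap_same: "i < length s \<Longrightarrow> j < length s \<Longrightarrow> s!i = s!j \<Longrightarrow> s[i := s!j, j := s!i] = s"
  by (intro nth_equalityI) (auto simp: nth_list_update)

lemma XX:
  assumes "length s = n"
  shows "Xop (\<not>b) (Xop b \<phi>) s = transp_sum n \<phi> s
      - (real n * (real n - 1) / 2 - real (count_list s (\<not>b)) * real (count_list s b) - real (count_list s (\<not>b))) * \<phi> s"
proof -
  define I where "I = {i. i < length s \<and> s!i = (\<not>b)}"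
  define J where "J = {j. j < length s \<and> s!j = b}"
  have fI: "finite I" and fJ: "finite J" by (auto simp: I_def J_def)
  have cI: "card I = count_list s (\<not>b)" and cJ: "card J = count_list s b" by (simp_all add: I_def J_def count_card)
  have inner: "(\<Sum>j\<in>{j. j < length (s[i := b]) \<and> s[i := b]!j = b}. \<phi> ((s[i := b])[j := \<not>b]))
        = \<phi> s + (\<Sum>j\<in>J. \<phi> (s[i := b, j := \<not>b]))" if "i \<in> I" for i
  proof -
    have i: "i < length s" "s!i = (\<not>b)" using that by (auto simp: I_def)
    have set: "{j. j < length (s[i := b]) \<and> s[i := b]!j = b} = insert i J"
      using i by (auto simp: J_def nth_list_update)
    have "i \<notin> J" using i by (auto simp: J_def)
    moreover have "s[i := b, i := \<not>b] = s" using i list_update_id[of s i] by simp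
    ultimately show ?thesis unfolding set using fJ by simp
  qed
  have LHS: "Xop (\<not>b) (Xop b \<phi>) s = real (card I) * \<phi> s + (\<Sum>(i,j)\<in>I \<times> J. \<phi> (s[i := b, j := \<not>b]))"
  proof -
    have "Xop (\<not>b) (Xop b \<phi>) s = (\<Sum>i\<in>I. \<phi> s + (\<Sum>j\<in>J. \<phi> (s[i := b, j := \<not>b])))"
      unfolding Xop_def I_def[symmetric] using inner by (intro sum.cong refl) simp
    also have "\<dots> = real (card I) * \<phi> s + (\<Sum>(i,j)\<in>I \<times> J. \<phi> (s[i := b, j := \<not>b]))"
      by (simp add: sum.distrib sum.cartesian_product)
    finally show ?thesis .
  qed
  define E where "E = {(i,j). (i,j) \<in> pairs n \<and> s!i = s!j}"
  define D where "D = {(i,j). (i,j) \<in> pairs n \<and> s!i \<noteq> s!j}"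
  have PED: "pairs n = E \<union> D" "E \<inter> D = {}" by (auto simp: E_def D_def)
  have fE: "finite E" and fD: "finite D" by (rule finite_subset[OF _ finite_pairs[of n]], auto simp: E_def D_def)+
  have Esum: "(\<Sum>(i,j)\<in>E. swap_op i j \<phi> s) = real (card E) * \<phi> s"
  proof -
    have "(\<Sum>(i,j)\<in>E. swap_op i j \<phi> s) = (\<Sum>(i,j)\<in>E. \<phi> s)"
    proof (intro sum.cong refl)
      fix x assume "x \<in> E"
      then obtain i j where x: "x = (i,j)" "i < j" "j < n" "s!i = s!j" by (auto simp: E_def pairs_def)
      then show "(case x of (i, j) \<Rightarrow> swap_op i j \<phi> s) = (case x of (i, j) \<Rightarrow> \<phi> s)"
        using swap_same[of i s j] assms by (simp add: swap_op_def)
    qed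
    then show ?thesis by simp
  qed
  define g where "g = (\<lambda>(i::nat,j::nat). if s!i = (\<not>b) then (i,j) else (j,i))"
  define mm where "mm = (\<lambda>(i::nat,j::nat). (min i j, max i j))"
  have D_iff: "(i,j) \<in> D \<longleftrightarrow> i < j \<and> j < n \<and> s!i \<noteq> s!j" for i j by (simp add: D_def pairs_def)
  have IJ_iff: "(i,j) \<in> I \<times> J \<longleftrightarrow> i < n \<and> j < n \<and> s!i = (\<not>b) \<and> s!j = b" for i j
    using assms by (auto simp: I_def J_def)
  have w1: "mm (g x) = x" if "x \<in> D" for x
  proof -
    obtain i j where x: "x = (i,j)" "i < j" by (metis D_iff old.prod.exhaust \<open>x \<in> D\<close>)
    show ?thesis using x by (simp add: g_def mm_def)
  qed
  have w2: "g x \<in> I \<times> J" if "x \<in> D" for x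
  proof -
    obtain i j where x: "x = (i,j)" "i < j" "j < n" "s!i \<noteq> s!j" by (metis D_iff old.prod.exhaust \<open>x \<in> D\<close>)
    show ?thesis
    proof (cases "s!i = (\<not>b)")
      case True then have "s!j = b" using x by auto
      then show ?thesis using x True assms by (simp add: g_def I_def J_def)
    next
      case False then have "s!i = b" "s!j = (\<not>b)" using x by auto
      then show ?thesis using x assms by (simp add: g_def I_def J_def)
    qed
  qed
  have w3: "g (mm y) = y" if "y \<in> I \<times> J" for y
  proof -
    obtain i j where y: "y = (i,j)" "s!i = (\<not>b)" "s!j = b" by (metis IJ_iff old.prod.exhaust \<open>y \<in> I \<times> J\<close>)
    then have "i \<noteq> j" by auto
    then show ?thesis using y by (cases "i < j") (auto simp: g_def mm_def min_def max_def)
  qed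
  have w4: "mm y \<in> D" if "y \<in> I \<times> J" for y
  proof -
    obtain i j where y: "y = (i,j)" "i < n" "j < n" "s!i = (\<not>b)" "s!j = b" by (metis IJ_iff old.prod.exhaust \<open>y \<in> I \<times> J\<close>)
    then have "i \<noteq> j" by auto
    then show ?thesis using y by (cases "i < j") (auto simp: D_iff mm_def min_def max_def)
  qed
  have w5: "(case g x of (i, j) \<Rightarrow> \<phi> (s[i := b, j := \<not> b])) = (case x of (i, j) \<Rightarrow> swap_op i j \<phi> s)" if "x \<in> D" for x
  proof -
    obtain i j where x: "x = (i,j)" "i < j" "j < n" "s!i \<noteq> s!j" by (metis D_iff old.prod.exhaust \<open>x \<in> D\<close>)
    show ?thesis
    proof (cases "s!i = (\<not>b)")
      case True then have "s!j = b" using x by auto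
      then show ?thesis using x True by (simp add: g_def swap_op_def)
    next
      case False then have "s!i = b" "s!j = (\<not>b)" using x by auto
      then show ?thesis using x by (simp add: g_def swap_op_def list_update_swap)
    qed
  qed
  have Dbij: "(\<Sum>(i,j)\<in>D. swap_op i j \<phi> s) = (\<Sum>(i,j)\<in>I \<times> J. \<phi> (s[i := b, j := \<not>b]))"
    by (rule sum.reindex_bij_witness[of _ mm g]) (use w1 w2 w3 w4 w5 in auto)
  have cD: "card D = card I * card J"
  proof -
    have "bij_betw g D (I \<times> J)"
      apply (rule bij_betw_byWitness[of _ mm])
      using w1 w2 w3 w4 by (simp_all only: image_subset_iff) blast+
    then have "card D = card (I \<times> J)" by (rule bij_betw_same_card)
    then show ?thesis by (simp add: card_cartesian_product)
  qed
  have cE: "real (card E) = real n * (real n - 1) / 2 - real (card I) * real (card J)"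
  proof -
    have "card (pairs n) = card E + card D" using PED fE fD by (simp add: card_Un_disjoint)
    then show ?thesis using card_pairs[of n] cD by simp
  qed
  have T: "transp_sum n \<phi> s = real (card E) * \<phi> s + (\<Sum>(i,j)\<in>I \<times> J. \<phi> (s[i := b, j := \<not>b]))"
    by (simp only: transp_sum_pairs PED(1) sum.union_disjoint[OF fE fD PED(2)] Esum Dbij)
  show ?thesis unfolding LHS T cE cI[symmetric] cJ[symmetric] by (simp add: algebra_simps)
qed


lemma basis_Suc_sum:
  "(\<Sum>s\<in>basis_strings (Suc n). F s) = (\<Sum>s\<in>basis_strings n. F (True#s) + F (False#s))"
proof -
  have fin: "finite (basis_strings n)" unfolding basis_strings_def by (rule finite_list_length)
  have eq: "basis_strings (Suc n) = (Cons True) ` basis_strings n \<union> (Cons False) ` basis_strings n"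
    by (auto simp: basis_strings_def length_Suc_conv)
  have "(\<Sum>s\<in>basis_strings (Suc n). F s) = (\<Sum>s\<in>(Cons True) ` basis_strings n. F s) + (\<Sum>s\<in>(Cons False) ` basis_strings n. F s)"
    unfolding eq by (rule sum.union_disjoint) (use fin in auto)
  also have "\<dots> = (\<Sum>s\<in>basis_strings n. F (True#s)) + (\<Sum>s\<in>basis_strings n. F (False#s))"
    by (simp add: sum.reindex)
  finally show ?thesis by (simp add: sum.distrib)
qed

lemma inner_prepend_same:
  "inner_q (Suc n) (prepend b \<psi>) (\<lambda>s. k1 * prepend b \<phi> s + k2 * prepend (\<not>b) ch s) = k1 * inner_q n \<psi> \<phi>"
  unfolding inner_q_def basis_Suc_sum
  by (cases b) (simp_all add: prepend_def sum_distrib_left algebra_simps)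

lemma count_False: "count_list s False = length s - count_list s True"
  by (induction s) (auto simp: Suc_diff_le count_le_length)

lemma count_update_True:
  "p < length s \<Longrightarrow> int (count_list (s[p := v]) True) = int (count_list s True) - (if s!p then 1 else 0) + (if v then 1 else 0)"
proof (induction s arbitrary: p)
  case Nil then show ?case by simp
next
  case (Cons a s)
  show ?case
  proof (cases p)
    case 0 then show ?thesis by simp
  next
    case (Suc q)
    have "int (count_list (s[q:=v]) True) = int (count_list s True) - (if s!q then 1 else 0) + (if v then 1 else 0)"
      by (rule Cons.IH) (use Suc Cons.prems in simp)
    moreover have eq: "(a#s)[p := v] = a # s[q := v]" "(a#s)!p = s!q" using Suc by simp_all
    moreover have c: "\<And>t. int (count_list (a#t) True) = int (count_list t True) + (if a then 1 else 0)" by simp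
    ultimately show ?thesis by (simp only: eq c)
  qed
qed

lemma Xop_nonzero:
  "Xop b \<phi> s \<noteq> 0 \<Longrightarrow> \<exists>p. p < length s \<and> s!p = b \<and> \<phi> (s[p := \<not>b]) \<noteq> 0"
  unfolding Xop_def by (drule sum.not_neutral_contains_not_neutral) auto

lemma Xop_cong: "(\<And>t. length t = length s \<Longrightarrow> f t = g t) \<Longrightarrow> Xop b f s = Xop b g s"
  unfolding Xop_def by (intro sum.cong refl) simp

lemma Xop_scale: "Xop b (\<lambda>t. k * f t) s = k * Xop b f s"
  unfolding Xop_def by (simp add: sum_distrib_left)

lemma content_sum_closed:
  "x \<le> n \<Longrightarrow> content_sum n x = (real n ^ 2 - real n) / 2 - real n * real x + real x ^ 2 - real x"
proof -
  assume x: "x \<le> n"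
  have h1: "content_sum n x = real (n - x) * (real (n - x) - 1) / 2 + (real x * (real x - 1) / 2 - real x)"
    unfolding content_sum_def by (simp add: sum_subtractf sum_real_lessThan)
  have h2: "real (n - x) = real n - real x" using x by simp
  show ?thesis unfolding h1 h2 power2_eq_square by (simp add: field_simps)
qed

lemma content_sum_diff:
  "x \<le> n \<Longrightarrow> z \<le> n \<Longrightarrow> content_sum n x - content_sum n z = (real z - real x) * (real n + 1 - real x - real z)"
  by (simp add: content_sum_closed power2_eq_square algebra_simps)

lemma content_sum_neq:
  "x \<le> n div 2 \<Longrightarrow> z \<le> n div 2 \<Longrightarrow> x \<noteq> z \<Longrightarrow> content_sum n x \<noteq> content_sum n z"
proof -
  assume a: "x \<le> n div 2" "z \<le> n div 2" "x \<noteq> z"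
  then have "x \<le> n" "z \<le> n" by auto
  moreover have "real n + 1 - real x - real z > 0" using a by linarith
  moreover have "real z - real x \<noteq> 0" using a(3) by simp
  ultimately have "(real z - real x) * (real n + 1 - real x - real z) \<noteq> 0" by simp
  moreover have "content_sum n x - content_sum n z = (real z - real x) * (real n + 1 - real x - real z)"
    by (rule content_sum_diff) fact+
  ultimately show ?thesis by (metis eq_iff_diff_eq_0)
qed

lemma T_sum: "finite Y \<Longrightarrow> transp_sum n (\<lambda>s. \<Sum>y\<in>Y. f y s) bs = (\<Sum>y\<in>Y. transp_sum n (f y) bs)"
  unfolding transp_sum_pairs swap_op_def case_prod_beta by (rule sum.swap)

lemma T_scale: "transp_sum n (\<lambda>s. k * f s) bs = k * transp_sum n f bs"
  unfolding transp_sum_pairs swap_op_def case_prod_beta by (simp add: sum_distrib_left)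


lemma foldr_eig:
  assumes fin: "finite Y"
    and eig: "\<And>y s. y \<in> Y \<Longrightarrow> length s = n \<Longrightarrow> transp_sum n (w y) s = content_sum n y * w y s"
    and psi: "\<And>s. length s = n \<Longrightarrow> \<psi> s = (\<Sum>y\<in>Y. w y s)"
  shows "length s = n \<Longrightarrow>
    foldr (\<lambda>y \<phi>. (\<lambda>bs. (transp_sum n \<phi> bs - content_sum n y * \<phi> bs) / (content_sum n x - content_sum n y))) L \<psi> s
    = (\<Sum>y\<in>Y. (\<Prod>z\<leftarrow>L. (content_sum n y - content_sum n z) / (content_sum n x - content_sum n z)) * w y s)"
proof (induction L arbitrary: s)
  case Nil then show ?case using psi by simp
next
  case (Cons z L)
  let ?F = "foldr (\<lambda>y \<phi>. (\<lambda>bs. (transp_sum n \<phi> bs - content_sum n y * \<phi> bs) / (content_sum n x - content_sum n y))) L \<psi>"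
  let ?P = "\<lambda>y. (\<Prod>z\<leftarrow>L. (content_sum n y - content_sum n z) / (content_sum n x - content_sum n z))"
  have T: "transp_sum n ?F s = (\<Sum>y\<in>Y. ?P y * (content_sum n y * w y s))"
  proof -
    have "transp_sum n ?F s = transp_sum n (\<lambda>t. \<Sum>y\<in>Y. ?P y * w y t) s"
      by (rule T_cong) (use Cons in auto)
    also have "\<dots> = (\<Sum>y\<in>Y. ?P y * transp_sum n (w y) s)"
      by (simp add: T_sum[OF fin] T_scale)
    also have "\<dots> = (\<Sum>y\<in>Y. ?P y * (content_sum n y * w y s))"
      by (intro sum.cong refl) (simp add: eig Cons.prems)
    finally show ?thesis .
  qed
  let ?d = "content_sum n x - content_sum n z"
  have "foldr (\<lambda>y \<phi>. (\<lambda>bs. (transp_sum n \<phi> bs - content_sum n y * \<phi> bs) / (content_sum n x - content_sum n y))) (z#L) \<psi> s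
      = (transp_sum n ?F s - content_sum n z * ?F s) / ?d" by (simp only: foldr_Cons o_apply)
  also have "\<dots> = ((\<Sum>y\<in>Y. ?P y * (content_sum n y * w y s)) - content_sum n z * (\<Sum>y\<in>Y. ?P y * w y s)) / ?d"
    by (simp only: T Cons.IH[OF Cons.prems])
  also have "\<dots> = (\<Sum>y\<in>Y. (?P y * (content_sum n y * w y s) - content_sum n z * (?P y * w y s)) / ?d)"
    by (simp only: sum_distrib_left sum_subtractf[symmetric] sum_divide_distrib)
  also have "\<dots> = (\<Sum>y\<in>Y. ((content_sum n y - content_sum n z) / ?d * ?P y) * w y s)"
  proof (intro sum.cong refl)
    fix y
    have "?P y * (content_sum n y * w y s) - content_sum n z * (?P y * w y s) = (content_sum n y - content_sum n z) * (?P y * w y s)"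
      by (simp add: algebra_simps)
    then show "(?P y * (content_sum n y * w y s) - content_sum n z * (?P y * w y s)) / ?d = ((content_sum n y - content_sum n z) / ?d * ?P y) * w y s"
      by simp
  qed
  finally show ?case by simp
qed

lemma proj_eig:
  assumes fin: "finite Y" and Ysub: "Y \<subseteq> {..n div 2}" and x: "x \<le> n div 2"
    and eig: "\<And>y s. y \<in> Y \<Longrightarrow> length s = n \<Longrightarrow> transp_sum n (w y) s = content_sum n y * w y s"
    and psi: "\<And>s. length s = n \<Longrightarrow> \<psi> s = (\<Sum>y\<in>Y. w y s)"
    and s: "length s = n"
  shows "isotypic_proj n x \<psi> s = (if x \<in> Y then w x s else 0)"
proof -
  define L where "L = filter (\<lambda>y. y \<noteq> x) [0..<Suc (n div 2)]"
  have Lset: "z \<in> set L \<longleftrightarrow> z \<le> n div 2 \<and> z \<noteq> x" for z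
    unfolding L_def by (auto simp del: upt_Suc)
  define P where "P = (\<lambda>y. (\<Prod>z\<leftarrow>L. (content_sum n y - content_sum n z) / (content_sum n x - content_sum n z)))"
  have P0: "P y = 0" if "y \<in> Y" "y \<noteq> x" for y
  proof -
    have "y \<in> set L" using that Ysub Lset by auto
    then show ?thesis unfolding P_def prod_list_zero_iff set_map
      by (intro image_eqI[of _ _ y]) simp_all
  qed
  have P1: "P x = 1"
  proof -
    have "map (\<lambda>z. (content_sum n x - content_sum n z) / (content_sum n x - content_sum n z)) L = map (\<lambda>_. 1) L"
    proof (intro map_cong refl)
      fix z assume "z \<in> set L"
      then have "z \<le> n div 2" "z \<noteq> x" using Lset by auto
      then have "content_sum n x - content_sum n z \<noteq> 0" using content_sum_neq[OF x, of z] by simp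
      then show "(content_sum n x - content_sum n z) / (content_sum n x - content_sum n z) = 1" by simp
    qed
    then show ?thesis unfolding P_def by (simp add: map_replicate_const)
  qed
  have "isotypic_proj n x \<psi> s = (\<Sum>y\<in>Y. P y * w y s)"
    unfolding isotypic_proj_def L_def[symmetric] P_def by (rule foldr_eig[OF fin eig psi s])
  also have "\<dots> = (\<Sum>y\<in>Y. if y = x then w y s else 0)"
  proof (intro sum.cong refl)
    fix y assume "y \<in> Y"
    then show "P y * w y s = (if y = x then w y s else 0)" using P0 P1 by (cases "y = x") simp_all
  qed
  also have "\<dots> = (if x \<in> Y then w x s else 0)"
    using fin by (simp add: sum.delta)
  finally show ?thesis .
qed


definition eb :: "bool \<Rightarrow> nat \<Rightarrow> nat \<Rightarrow> real" where
  "eb b n' r = (if b then real r else real n' - real r)"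
definition eb2 :: "bool \<Rightarrow> nat \<Rightarrow> nat \<Rightarrow> real" where
  "eb2 b n' r = (if b then real n' - real r - 1 else real r - 1)"
definition lam :: "bool \<Rightarrow> nat \<Rightarrow> nat \<Rightarrow> real \<Rightarrow> real" where
  "lam b n' r c' = c' - (real n' * (real n' - 1) / 2 - (real n' - eb b n' r) * eb b n' r - (real n' - eb b n' r))"

lemma count_b:
  assumes "count_list s True = r"
  shows "real (count_list s b) = eb b (length s) r"
  using assms count_le_length[of s True] by (cases b) (auto simp: eb_def count_False of_nat_diff)

lemma step_TA:
  assumes eig: "\<And>t. length t = n' \<Longrightarrow> transp_sum n' \<phi> t = c' * \<phi> t"
    and supp: "\<And>t. \<phi> t \<noteq> 0 \<Longrightarrow> length t = n' \<and> count_list t True = r"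
    and s: "length s = Suc n'"
  shows "transp_sum (Suc n') (prepend b \<phi>) s = (c' + eb b n' r) * prepend b \<phi> s + prepend (\<not>b) (Xop b \<phi>) s"
proof -
  obtain c rest where sr: "s = c # rest" and lr: "length rest = n'" using s by (cases s) auto
  have cnt: "real (count_list rest b) * \<phi> rest = eb b n' r * \<phi> rest"
  proof (cases "\<phi> rest = 0")
    case False then show ?thesis using supp[OF False] count_b by auto
  qed simp
  show ?thesis
  proof (cases "c = b")
    case True then show ?thesis
      unfolding sr T_prepend[OF lr] using eig[OF lr] cnt by (simp add: prepend_def algebra_simps)
  next
    case False then have "c = (\<not>b)" by simp
    then show ?thesis unfolding sr T_prepend[OF lr] by (simp add: prepend_def)
  qed
qed

lemma Xop_supp:
  assumes supp: "\<And>t. \<phi> t \<noteq> 0 \<Longrightarrow> length t = n' \<and> count_list t True = r"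
    and nz: "Xop b \<phi> rest \<noteq> 0"
  shows "length rest = n' \<and> int (count_list rest True) = int r + (if b then 1 else -1)"
proof -
  obtain p where p: "p < length rest" "rest!p = b" "\<phi> (rest[p := \<not>b]) \<noteq> 0" using Xop_nonzero[OF nz] by blast
  have "length (rest[p := \<not>b]) = n'" "count_list (rest[p := \<not>b]) True = r" using supp[OF p(3)] by auto
  moreover have "int (count_list (rest[p := \<not>b]) True) = int (count_list rest True) - (if rest!p then 1 else 0) + (if \<not>b then 1 else 0)"
    by (rule count_update_True[OF p(1)])
  ultimately show ?thesis using p(2) by (cases b) auto
qed

lemma step_TB:
  assumes eig: "\<And>t. length t = n' \<Longrightarrow> transp_sum n' \<phi> t = c' * \<phi> t"
    and supp: "\<And>t. \<phi> t \<noteq> 0 \<Longrightarrow> length t = n' \<and> count_list t True = r"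
    and s: "length s = Suc n'"
  shows "transp_sum (Suc n') (prepend (\<not>b) (Xop b \<phi>)) s = lam b n' r c' * prepend b \<phi> s + (c' + eb2 b n' r) * prepend (\<not>b) (Xop b \<phi>) s"
proof -
  obtain c rest where sr: "s = c # rest" and lr: "length rest = n'" using s by (cases s) auto
  have TX: "transp_sum n' (Xop b \<phi>) rest = c' * Xop b \<phi> rest"
  proof -
    have "transp_sum n' (Xop b \<phi>) rest = Xop b (transp_sum n' \<phi>) rest" by (rule T_Xop[OF lr])
    also have "\<dots> = Xop b (\<lambda>t. c' * \<phi> t) rest" by (rule Xop_cong) (simp add: eig lr)
    also have "\<dots> = c' * Xop b \<phi> rest" by (rule Xop_scale)
    finally show ?thesis .
  qed
  have cnt: "real (count_list rest (\<not>b)) * Xop b \<phi> rest = eb2 b n' r * Xop b \<phi> rest"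
  proof (cases "Xop b \<phi> rest = 0")
    case False
    from Xop_supp[OF supp False] have h: "length rest = n'" "int (count_list rest True) = int r + (if b then 1 else -1)" by auto
    have "real (count_list rest (\<not>b)) = eb2 b n' r"
    proof (cases b)
      case True
      then have "count_list rest True = r + 1" using h by simp
      then show ?thesis using True h count_le_length[of rest True] by (simp add: eb2_def count_False of_nat_diff)
    next
      case False
      then have "int (count_list rest True) = int r - 1" using h(2) by simp
      then have "r = count_list rest True + 1" by linarith
      then show ?thesis using False by (simp add: eb2_def)
    qed
    then show ?thesis by simp
  qed simp
  have XX': "Xop (\<not>b) (Xop b \<phi>) rest = lam b n' r c' * \<phi> rest"
  proof (cases "\<phi> rest = 0")
    case True
    then show ?thesis using XX[OF lr, of b \<phi>] eig[OF lr] by simp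
  next
    case False
    then have cr: "count_list rest True = r" using supp by blast
    have cb: "real (count_list rest b) = eb b n' r" using count_b[OF cr] lr by simp
    have cnb: "real (count_list rest (\<not>b)) = real n' - eb b n' r" using count_b[OF cr, of "\<not>b"] lr
      by (cases b) (auto simp: eb_def)
    show ?thesis using XX[OF lr, of b \<phi>] eig[OF lr] unfolding cb cnb lam_def by (simp add: algebra_simps)
  qed
  show ?thesis
  proof (cases "c = b")
    case True then show ?thesis
      unfolding sr T_prepend[OF lr] using XX' by (simp add: prepend_def)
  next
    case False then have "c = (\<not>b)" by simp
    then show ?thesis unfolding sr T_prepend[OF lr] using TX cnt by (simp add: prepend_def algebra_simps)
  qed
qed

lemma ident1:
  assumes "y \<le> n'"
  shows "(content_sum n' y + eb b n' r) + (content_sum n' y + eb2 b n' r) = content_sum (Suc n') y + content_sum (Suc n') (Suc y)"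
  using assms by (cases b) (simp_all add: content_sum_closed eb_def eb2_def power2_eq_square field_simps)

lemma ident2:
  assumes "y \<le> n'"
  shows "((content_sum n' y + eb b n' r) - content_sum (Suc n') y) * ((content_sum n' y + eb b n' r) - content_sum (Suc n') (Suc y))
         + lam b n' r (content_sum n' y) = 0"
  using assms by (cases b) (simp_all add: content_sum_closed eb_def lam_def power2_eq_square field_simps)

definition aa :: "bool \<Rightarrow> nat \<Rightarrow> nat \<Rightarrow> nat \<Rightarrow> real" where
  "aa b n' r y = content_sum n' y + eb b n' r"
definition als :: "bool \<Rightarrow> nat \<Rightarrow> nat \<Rightarrow> nat \<Rightarrow> real" where
  "als b n' r y = (aa b n' r y - content_sum (Suc n') (Suc y)) / (content_sum (Suc n') y - content_sum (Suc n') (Suc y))"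
definition ali :: "bool \<Rightarrow> nat \<Rightarrow> nat \<Rightarrow> nat \<Rightarrow> real" where
  "ali b n' r y = (aa b n' r y - content_sum (Suc n') y) / (content_sum (Suc n') (Suc y) - content_sum (Suc n') y)"
definition US :: "bool \<Rightarrow> nat \<Rightarrow> nat \<Rightarrow> nat \<Rightarrow> qstate \<Rightarrow> qstate" where
  "US b n' r y \<phi> = (\<lambda>s. als b n' r y * prepend b \<phi> s
      + (1 / (content_sum (Suc n') y - content_sum (Suc n') (Suc y))) * prepend (\<not>b) (Xop b \<phi>) s)"
definition UI :: "bool \<Rightarrow> nat \<Rightarrow> nat \<Rightarrow> nat \<Rightarrow> qstate \<Rightarrow> qstate" where
  "UI b n' r y \<phi> = (\<lambda>s. ali b n' r y * prepend b \<phi> s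
      + (1 / (content_sum (Suc n') (Suc y) - content_sum (Suc n') y)) * prepend (\<not>b) (Xop b \<phi>) s)"

lemma alg_eig:
  fixes A B a d l cs ci :: real
  assumes "cs \<noteq> ci" "a + d = cs + ci" "(a - cs) * (a - ci) + l = 0"
  shows "((a - ci) / (cs - ci)) * (a * A + B) + (1 / (cs - ci)) * (l * A + d * B) = cs * (((a - ci) / (cs - ci)) * A + (1 / (cs - ci)) * B)"
proof -
  have d: "d = cs + ci - a" and l: "l = - ((a - cs) * (a - ci))" using assms(2,3) by linarith+
  have ne: "cs - ci \<noteq> 0" using assms(1) by simp
  show ?thesis unfolding d l using ne by (simp add: field_simps)
qed

lemma alg_sum:
  fixes A B a cs ci :: real
  assumes "cs \<noteq> ci"
  shows "((a - ci) / (cs - ci)) * A + (1 / (cs - ci)) * B + (((a - cs) / (ci - cs)) * A + (1 / (ci - cs)) * B) = A"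
proof -
  define D where "D = cs - ci"
  have ne: "D \<noteq> 0" using assms by (simp add: D_def)
  have e: "ci - cs = - D" by (simp add: D_def)
  have "((a - ci) / (cs - ci)) * A + (1 / (cs - ci)) * B + (((a - cs) / (ci - cs)) * A + (1 / (ci - cs)) * B)
      = (((a - ci) * A + B) - ((a - cs) * A + B)) / D"
    unfolding e D_def[symmetric] by (simp add: diff_divide_distrib add_divide_distrib algebra_simps)
  also have "\<dots> = (D * A) / D" by (simp add: D_def algebra_simps)
  also have "\<dots> = A" using ne by simp
  finally show ?thesis .
qed

lemma cs_ne:
  assumes "2 * y \<le> n'"
  shows "content_sum (Suc n') y - content_sum (Suc n') (Suc y) = real n' + 1 - 2 * real y"
    and "content_sum (Suc n') y \<noteq> content_sum (Suc n') (Suc y)"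
proof -
  show e: "content_sum (Suc n') y - content_sum (Suc n') (Suc y) = real n' + 1 - 2 * real y"
    using content_sum_diff[of y "Suc n'" "Suc y"] assms by simp
  have "real n' + 1 - 2 * real y > 0" using assms by linarith
  then show "content_sum (Suc n') y \<noteq> content_sum (Suc n') (Suc y)" using e by auto
qed

lemma US_eig:
  assumes eig: "\<And>t. length t = n' \<Longrightarrow> transp_sum n' \<phi> t = content_sum n' y * \<phi> t"
    and supp: "\<And>t. \<phi> t \<noteq> 0 \<Longrightarrow> length t = n' \<and> count_list t True = r"
    and y: "2 * y \<le> n'" and s: "length s = Suc n'"
  shows "transp_sum (Suc n') (US b n' r y \<phi>) s = content_sum (Suc n') y * US b n' r y \<phi> s"
    and "transp_sum (Suc n') (UI b n' r y \<phi>) s = content_sum (Suc n') (Suc y) * UI b n' r y \<phi> s"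
proof -
  let ?cs = "content_sum (Suc n') y" and ?ci = "content_sum (Suc n') (Suc y)" and ?a = "aa b n' r y"
  have yn: "y \<le> n'" using y by simp
  have TA: "transp_sum (Suc n') (prepend b \<phi>) s = ?a * prepend b \<phi> s + prepend (\<not>b) (Xop b \<phi>) s"
    using step_TA[OF eig supp s] by (simp add: aa_def)
  have TB: "transp_sum (Suc n') (prepend (\<not>b) (Xop b \<phi>)) s = lam b n' r (content_sum n' y) * prepend b \<phi> s
      + (content_sum n' y + eb2 b n' r) * prepend (\<not>b) (Xop b \<phi>) s"
    by (rule step_TB[OF eig supp s])
  have i1: "?a + (content_sum n' y + eb2 b n' r) = ?cs + ?ci" using ident1[OF yn] by (simp add: aa_def)
  have i2: "(?a - ?cs) * (?a - ?ci) + lam b n' r (content_sum n' y) = 0" using ident2[OF yn] by (simp add: aa_def)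
  have ne: "?cs \<noteq> ?ci" using cs_ne[OF y] by simp
  show "transp_sum (Suc n') (US b n' r y \<phi>) s = ?cs * US b n' r y \<phi> s"
    unfolding US_def T_linear TA TB als_def using alg_eig[OF ne i1 i2] by simp
  have i1': "?a + (content_sum n' y + eb2 b n' r) = ?ci + ?cs" using i1 by simp
  have i2': "(?a - ?ci) * (?a - ?cs) + lam b n' r (content_sum n' y) = 0" using i2 by (simp add: mult.commute)
  show "transp_sum (Suc n') (UI b n' r y \<phi>) s = ?ci * UI b n' r y \<phi> s"
    unfolding UI_def T_linear TA TB ali_def using alg_eig[OF ne[symmetric] i1' i2'] by simp
qed

lemma US_UI_sum:
  assumes y: "2 * y \<le> n'"
  shows "US b n' r y \<phi> s + UI b n' r y \<phi> s = prepend b \<phi> s"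
  unfolding US_def UI_def als_def ali_def by (rule alg_sum) (rule cs_ne(2)[OF y])

lemma prepend_zero: "(\<And>t. \<phi> t = 0) \<Longrightarrow> prepend b \<phi> s = 0"
  by (simp add: prepend_def split: list.split)

lemma Xop_zero: "(\<And>t. \<phi> t = 0) \<Longrightarrow> Xop b \<phi> s = 0"
  by (simp add: Xop_def)

lemma US_zero: "(\<And>t. \<phi> t = 0) \<Longrightarrow> US b n' r y \<phi> s = 0"
  and UI_zero: "(\<And>t. \<phi> t = 0) \<Longrightarrow> UI b n' r y \<phi> s = 0"
  by (simp_all add: US_def UI_def prepend_zero Xop_zero)

lemma prepend_supp:
  assumes supp: "\<And>t. \<phi> t \<noteq> 0 \<Longrightarrow> length t = n' \<and> count_list t True = r"
  shows "prepend b \<phi> s \<noteq> 0 \<Longrightarrow> length s = Suc n' \<and> count_list s True = r + (if b then 1 else 0)"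
    and "prepend (\<not>b) (Xop b \<phi>) s \<noteq> 0 \<Longrightarrow> length s = Suc n' \<and> count_list s True = r + (if b then 1 else 0)"
proof -
  assume nz: "prepend b \<phi> s \<noteq> 0"
  then obtain rest where s: "s = b # rest" "\<phi> rest \<noteq> 0" by (auto simp: prepend_def split: list.splits if_splits)
  then show "length s = Suc n' \<and> count_list s True = r + (if b then 1 else 0)" using supp[OF s(2)] by auto
next
  assume nz: "prepend (\<not>b) (Xop b \<phi>) s \<noteq> 0"
  then obtain rest where s: "s = (\<not>b) # rest" "Xop b \<phi> rest \<noteq> 0" by (auto simp: prepend_def split: list.splits if_splits)
  from Xop_supp[OF supp s(2)] have h: "length rest = n'" "int (count_list rest True) = int r + (if b then 1 else -1)" by auto
  show "length s = Suc n' \<and> count_list s True = r + (if b then 1 else 0)"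
    using h s(1) by (cases b) auto
qed

lemma US_supp:
  assumes supp: "\<And>t. \<phi> t \<noteq> 0 \<Longrightarrow> length t = n' \<and> count_list t True = r"
  shows "US b n' r y \<phi> s \<noteq> 0 \<Longrightarrow> length s = Suc n' \<and> count_list s True = r + (if b then 1 else 0)"
    and "UI b n' r y \<phi> s \<noteq> 0 \<Longrightarrow> length s = Suc n' \<and> count_list s True = r + (if b then 1 else 0)"
proof -
  note p1 = prepend_supp(1)[OF supp] and p2 = prepend_supp(2)[OF supp]
  show "US b n' r y \<phi> s \<noteq> 0 \<Longrightarrow> length s = Suc n' \<and> count_list s True = r + (if b then 1 else 0)"
  proof -
    assume "US b n' r y \<phi> s \<noteq> 0"
    then have "prepend b \<phi> s \<noteq> 0 \<or> prepend (\<not>b) (Xop b \<phi>) s \<noteq> 0" by (auto simp: US_def)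
    then show ?thesis using p1 p2 by blast
  qed
  show "UI b n' r y \<phi> s \<noteq> 0 \<Longrightarrow> length s = Suc n' \<and> count_list s True = r + (if b then 1 else 0)"
  proof -
    assume "UI b n' r y \<phi> s \<noteq> 0"
    then have "prepend b \<phi> s \<noteq> 0 \<or> prepend (\<not>b) (Xop b \<phi>) s \<noteq> 0" by (auto simp: UI_def)
    then show ?thesis using p1 p2 by blast
  qed
qed

lemma US_inner:
  "inner_q (Suc n') (prepend b \<psi>) (US b n' r y \<phi>) = als b n' r y * inner_q n' \<psi> \<phi>"
  "inner_q (Suc n') (prepend b \<psi>) (UI b n' r y \<phi>) = ali b n' r y * inner_q n' \<psi> \<phi>"
  unfolding US_def UI_def by (rule inner_prepend_same)+


primrec prep :: "bool list \<Rightarrow> qstate \<Rightarrow> qstate" where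
  "prep [] D = D"
| "prep (b#a) D = prepend b (prep a D)"

fun qf :: "nat \<Rightarrow> nat \<Rightarrow> bool list \<Rightarrow> nat \<Rightarrow> real" where
  "qf N M [] y = (if y = 0 then 1 else 0)"
| "qf N M (b#a) y = als b (N + length a) (M + count_list a True) y * qf N M a y
     + (if 0 < y then ali b (N + length a) (M + count_list a True) (y - 1) * qf N M a (y - 1) else 0)"

lemma T_add: "transp_sum n (\<lambda>s. f s + g s) bs = transp_sum n f bs + transp_sum n g bs"
  using T_linear[of n 1 f 1 g bs] by simp

lemma T_zero': "(\<And>t. f t = 0) \<Longrightarrow> transp_sum n f bs = 0"
proof -
  assume "\<And>t. f t = 0"
  then have "f = (\<lambda>t. 0)" by auto
  then show ?thesis by (simp add: T_zero)
qed

lemma inner_add: "inner_q n f (\<lambda>s. g s + h s) = inner_q n f g + inner_q n f h"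
  by (simp add: inner_q_def sum.distrib algebra_simps)

lemma inner_zero: "(\<And>t. g t = 0) \<Longrightarrow> inner_q n f g = 0"
  by (simp add: inner_q_def)

lemma chain:
  assumes Deig: "\<And>t. length t = N \<Longrightarrow> transp_sum N D t = content_sum N 0 * D t"
    and Dsupp: "\<And>t. D t \<noteq> 0 \<Longrightarrow> length t = N \<and> count_list t True = M"
    and Dnorm: "inner_q N D D = 1"
  shows "length a \<le> N \<Longrightarrow> \<exists>w. (\<forall>s. length s = N + length a \<longrightarrow> prep a D s = (\<Sum>y\<le>length a. w y s))
   \<and> (\<forall>y s. y \<le> length a \<longrightarrow> length s = N + length a \<longrightarrow> transp_sum (N + length a) (w y) s = content_sum (N + length a) y * w y s)
   \<and> (\<forall>y s. w y s \<noteq> 0 \<longrightarrow> length s = N + length a \<and> count_list s True = M + count_list a True)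
   \<and> (\<forall>y s. length a < y \<longrightarrow> w y s = 0)
   \<and> (\<forall>y. inner_q (N + length a) (prep a D) (w y) = qf N M a y)"
proof (induction a)
  case Nil
  let ?w = "\<lambda>y. if y = 0 then D else (\<lambda>s. 0)"
  show ?case
  proof (intro exI[of _ ?w] conjI allI impI)
    fix y and s :: "bool list" assume "y \<le> length ([]::bool list)" "length s = N + length ([]::bool list)"
    then show "transp_sum (N + length ([]::bool list)) (?w y) s = content_sum (N + length ([]::bool list)) y * ?w y s" using Deig[of s] by simp
  next
    fix y and s :: "bool list" assume "?w y s \<noteq> 0"
    then show "length s = N + length ([]::bool list)" "count_list s True = M + count_list ([]::bool list) True"
      using Dsupp by (auto split: if_splits)
  next
    fix y
    show "inner_q (N + length ([]::bool list)) (prep [] D) (?w y) = qf N M [] y"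
    proof (cases "y = 0")
      case True then show ?thesis using Dnorm by simp
    next
      case False then show ?thesis by (simp add: inner_q_def)
    qed
  next
    fix s :: "bool list" assume "length s = N + length ([]::bool list)"
    show "prep [] D s = (\<Sum>y\<le>length ([]::bool list). ?w y s)" by simp
  next
    fix y and s :: "bool list" assume "length ([]::bool list) < y"
    then show "?w y s = 0" by simp
  qed
next
  case (Cons b a)
  have la: "length a \<le> N" using Cons.prems by simp
  from Cons.IH[OF la] obtain w where
    W1: "\<forall>s. length s = N + length a \<longrightarrow> prep a D s = (\<Sum>y\<le>length a. w y s)"
    and W2: "\<forall>y s. y \<le> length a \<longrightarrow> length s = N + length a \<longrightarrow> transp_sum (N + length a) (w y) s = content_sum (N + length a) y * w y s"
    and W3: "\<forall>y s. w y s \<noteq> 0 \<longrightarrow> length s = N + length a \<and> count_list s True = M + count_list a True"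
    and W4: "\<forall>y s. length a < y \<longrightarrow> w y s = 0"
    and W5: "\<forall>y. inner_q (N + length a) (prep a D) (w y) = qf N M a y"
    by blast
  have wsum: "\<And>s. length s = N + length a \<Longrightarrow> prep a D s = (\<Sum>y\<le>length a. w y s)" using W1 by blast
  have weig: "\<And>y s. y \<le> length a \<Longrightarrow> length s = N + length a \<Longrightarrow> transp_sum (N + length a) (w y) s = content_sum (N + length a) y * w y s"
    using W2 by blast
  have wsupp: "\<And>y s. w y s \<noteq> 0 \<Longrightarrow> length s = N + length a \<and> count_list s True = M + count_list a True" using W3 by blast
  have wzero: "\<And>y s. length a < y \<Longrightarrow> w y s = 0" using W4 by blast
  have winner: "\<And>y. inner_q (N + length a) (prep a D) (w y) = qf N M a y" using W5 by blast
  define n' where "n' = N + length a"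
  define r where "r = M + count_list a True"
  define t where "t = length a"
  have tN: "t < N" using Cons.prems by (simp add: t_def)
  have y2: "2 * y \<le> n'" if "y \<le> t" for y using that tN by (simp add: n'_def t_def)
  define w' where "w' = (\<lambda>y s. US b n' r y (w y) s + (if 0 < y then UI b n' r (y - 1) (w (y - 1)) s else 0))"
  have len: "N + length (b#a) = Suc n'" by (simp add: n'_def)
  have cnt: "M + count_list (b#a) True = r + (if b then 1 else 0)" by (simp add: r_def)
  have lba: "length (b#a) = Suc t" by (simp add: t_def)
  have weig': "\<And>t'. length t' = n' \<Longrightarrow> transp_sum n' (w y) t' = content_sum n' y * w y t'" if "y \<le> t" for y
    using weig that by (simp add: n'_def t_def)
  have wsupp': "\<And>t'. w y t' \<noteq> 0 \<Longrightarrow> length t' = n' \<and> count_list t' True = r" for y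
    using wsupp by (simp add: n'_def r_def)
  have wz: "\<And>t'. w y t' = 0" if "t < y" for y using wzero that by (simp add: t_def)
  have S: "prep (b#a) D s = (\<Sum>y\<le>Suc t. w' y s)" if s: "length s = Suc n'" for s
  proof -
    obtain c rest where sr: "s = c # rest" and lr: "length rest = n'" using s by (cases s) auto
    have "prep (b#a) D s = (\<Sum>y\<le>t. prepend b (w y) s)"
      using wsum[of rest] lr by (cases "c = b") (simp_all add: sr prepend_def n'_def t_def)
    also have "\<dots> = (\<Sum>y\<le>t. US b n' r y (w y) s + UI b n' r y (w y) s)"
      by (intro sum.cong refl) (simp add: US_UI_sum y2)
    also have "\<dots> = (\<Sum>y\<le>t. US b n' r y (w y) s) + (\<Sum>y\<le>t. UI b n' r y (w y) s)"
      by (rule sum.distrib)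
    also have "(\<Sum>y\<le>t. US b n' r y (w y) s) = (\<Sum>y\<le>Suc t. US b n' r y (w y) s)"
      using US_zero[OF wz[of "Suc t"]] by simp
    also have "(\<Sum>y\<le>t. UI b n' r y (w y) s) = (\<Sum>y\<le>Suc t. (if 0 < y then UI b n' r (y - 1) (w (y - 1)) s else 0))"
      by (subst sum.atMost_Suc_shift) simp
    finally show ?thesis unfolding w'_def by (simp add: sum.distrib)
  qed
  have eUS: "transp_sum (Suc n') (US b n' r y (w y)) s = content_sum (Suc n') y * US b n' r y (w y) s"
    if "y \<le> Suc t" "length s = Suc n'" for y s
  proof (cases "y \<le> t")
    case True then show ?thesis using US_eig(1)[OF weig'[OF True] wsupp' y2[OF True] that(2)] by simp
  next
    case False then have "t < y" by simp
    then show ?thesis using US_zero[OF wz] T_zero' by simp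
  qed
  have E: "transp_sum (Suc n') (w' y) s = content_sum (Suc n') y * w' y s"
    if "y \<le> Suc t" "length s = Suc n'" for y s
  proof (cases y)
    case 0
    have "w' y = US b n' r y (w y)" unfolding w'_def using 0 by simp
    then show ?thesis using eUS[OF that] by simp
  next
    case (Suc y')
    have yt: "y' \<le> t" using that Suc by simp
    have w'e: "w' y = (\<lambda>s. US b n' r y (w y) s + UI b n' r y' (w y') s)" unfolding w'_def using Suc by simp
    have "transp_sum (Suc n') (UI b n' r y' (w y')) s = content_sum (Suc n') (Suc y') * UI b n' r y' (w y') s"
      by (rule US_eig(2)[OF weig'[OF yt] wsupp' y2[OF yt] that(2)])
    then show ?thesis unfolding w'e T_add using eUS[OF that] Suc by (simp add: algebra_simps)
  qed
  have SU: "length s = Suc n' \<and> count_list s True = r + (if b then 1 else 0)" if "w' y s \<noteq> 0" for y s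
  proof -
    have "US b n' r y (w y) s \<noteq> 0 \<or> (0 < y \<and> UI b n' r (y - 1) (w (y - 1)) s \<noteq> 0)"
      using that unfolding w'_def by (auto split: if_splits)
    moreover have s1: "\<And>t'. w y t' \<noteq> 0 \<Longrightarrow> length t' = n' \<and> count_list t' True = r" by (rule wsupp')
    moreover have s2: "\<And>t'. w (y - 1) t' \<noteq> 0 \<Longrightarrow> length t' = n' \<and> count_list t' True = r" by (rule wsupp')
    ultimately show ?thesis using US_supp(1)[OF s1, where b=b and y=y and s=s] US_supp(2)[OF s2, where b=b and y="y - 1" and s=s] by blast
  qed
  have Z: "w' y s = 0" if "Suc t < y" for y s
    unfolding w'_def using US_zero[OF wz] UI_zero[OF wz] that by simp
  have I: "inner_q (Suc n') (prep (b#a) D) (w' y) = qf N M (b#a) y" for y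
  proof (cases y)
    case 0
    have "w' y = US b n' r y (w y)" unfolding w'_def using 0 by simp
    then show ?thesis using US_inner(1)[of n' b "prep a D" r y "w y"] winner[of y] 0
      by (simp add: n'_def r_def)
  next
    case (Suc y')
    have w'e: "w' y = (\<lambda>s. US b n' r y (w y) s + UI b n' r y' (w y') s)" unfolding w'_def using Suc by simp
    show ?thesis unfolding w'e inner_add prep.simps US_inner using winner[of y] winner[of y'] Suc
      by (simp add: n'_def r_def)
  qed
  have len2: "N + Suc t = Suc n'" by (simp add: n'_def t_def)
  show ?case
    unfolding lba cnt len2
  proof (intro exI[of _ w'] conjI allI impI)
    fix s :: "bool list" assume "length s = Suc n'" then show "prep (b#a) D s = (\<Sum>y\<le>Suc t. w' y s)" by (rule S)
  next
    fix y and s :: "bool list" assume "y \<le> Suc t" "length s = Suc n'"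
    then show "transp_sum (Suc n') (w' y) s = content_sum (Suc n') y * w' y s" by (rule E)
  next
    fix y and s :: "bool list" assume "w' y s \<noteq> 0"
    then show "length s = Suc n'" "count_list s True = r + (if b then 1 else 0)" using SU by blast+
  next
    fix y and s :: "bool list" assume "Suc t < y" then show "w' y s = 0" by (rule Z)
  next
    fix y show "inner_q (Suc n') (prep (b#a) D) (w' y) = qf N M (b#a) y" by (rule I)
  qed
qed


lemma count_swap:
  assumes "i < length t" "j < length t"
  shows "count_list (t[i := t!j, j := t!i]) x = count_list t x"
  using mset_swap[of j t i] assms by (simp flip: count_mset)

lemma dicke_supp: "dicke L M t \<noteq> 0 \<Longrightarrow> length t = L \<and> count_list t True = M"
  by (simp add: dicke_def split: if_splits)

lemma dicke_eig:
  assumes "length t = L"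
  shows "transp_sum L (dicke L M) t = content_sum L 0 * dicke L M t"
proof -
  have "transp_sum L (dicke L M) t = (\<Sum>(i,j)\<in>pairs L. dicke L M t)"
    unfolding transp_sum_pairs
  proof (intro sum.cong refl)
    fix x assume "x \<in> pairs L"
    then obtain i j where x: "x = (i,j)" "i < j" "j < L" by (auto simp: pairs_def)
    then show "(case x of (i, j) \<Rightarrow> swap_op i j (dicke L M) t) = (case x of (i, j) \<Rightarrow> dicke L M t)"
      using count_swap[of i t j True] assms by (simp add: swap_op_def dicke_def)
  qed
  also have "\<dots> = real (card (pairs L)) * dicke L M t" by simp
  also have "\<dots> = content_sum L 0 * dicke L M t"
    by (simp add: card_pairs content_sum_closed power2_eq_square field_simps)
  finally show ?thesis .
qed

lemma basis_0: "basis_strings 0 = {[]}"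
  by (auto simp: basis_strings_def)

lemma count_strings: "(\<Sum>s\<in>basis_strings L. if count_list s True = M then 1 else 0) = real (L choose M)"
proof (induction L arbitrary: M)
  case 0 then show ?case by (simp add: basis_0)
next
  case (Suc L)
  have "(\<Sum>s\<in>basis_strings (Suc L). if count_list s True = M then 1 else (0::real))
      = (\<Sum>s\<in>basis_strings L. (if Suc (count_list s True) = M then 1 else 0)) + (\<Sum>s\<in>basis_strings L. (if count_list s True = M then 1 else 0))"
    unfolding basis_Suc_sum by (simp add: sum.distrib)
  also have "\<dots> = real (Suc L choose M)"
  proof (cases M)
    case 0 then show ?thesis using Suc.IH[of 0] by simp
  next
    case (Suc M')
    then show ?thesis using Suc.IH[of M'] Suc.IH[of M] by simp
  qed
  finally show ?case .
qed

lemma dicke_norm: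
  assumes "M \<le> L"
  shows "inner_q L (dicke L M) (dicke L M) = 1"
proof -
  have pos: "real (L choose M) > 0" using assms by simp
  have "inner_q L (dicke L M) (dicke L M) = (\<Sum>s\<in>basis_strings L. (if count_list s True = M then 1 else 0) / real (L choose M))"
    unfolding inner_q_def
  proof (intro sum.cong refl)
    fix s assume "s \<in> basis_strings L"
    then show "dicke L M s * dicke L M s = (if count_list s True = M then 1 else 0) / real (L choose M)"
      using pos by (simp add: basis_strings_def dicke_def)
  qed
  also have "\<dots> = 1" using pos by (simp add: sum_divide_distrib[symmetric] count_strings)
  finally show ?thesis .
qed

lemma prep_explicit:
  "prep a D s = (if length a \<le> length s \<and> take (length a) s = a then D (drop (length a) s) else 0)"
proof (induction a arbitrary: s)
  case Nil then show ?case by simp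
next
  case (Cons b a)
  show ?case
  proof (cases s)
    case Nil then show ?thesis by (simp add: prepend_def)
  next
    case (Cons c rest) then show ?thesis using Cons.IH[of rest] by (auto simp: prepend_def)
  qed
qed

lemma Xi_prep:
  assumes "l \<le> k" "k \<le> n"
  shows "Xi n m k l s = prep (replicate l True @ replicate (k - l) False) (dicke (n - k) (m - l)) s"
proof -
  let ?a = "replicate l True @ replicate (k - l) False"
  have la: "length ?a = k" using assms by simp
  show ?thesis
  proof (cases "length s = n")
    case True
    have tk: "take k s = take l s @ take (k - l) (drop l s)"
      using take_add[of l "k - l" s] assms by simp
    have "take k s = ?a \<longleftrightarrow> take l s = replicate l True \<and> take (k - l) (drop l s) = replicate (k - l) False"
      unfolding tk using True assms by (subst append_eq_append_conv) auto
    then show ?thesis using True assms unfolding prep_explicit la Xi_def by (simp add: dicke_def)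
  next
    case False
    then show ?thesis using assms unfolding prep_explicit la Xi_def by (auto simp: dicke_def)
  qed
qed

lemma qf_zero: "length a < y \<Longrightarrow> qf N M a y = 0"
  by (induction a arbitrary: y) auto

lemma inner_cong: "(\<And>s. length s = n \<Longrightarrow> g s = g' s) \<Longrightarrow> (\<And>s. length s = n \<Longrightarrow> f s = f' s) \<Longrightarrow> inner_q n f g = inner_q n f' g'"
  unfolding inner_q_def basis_strings_def by (intro sum.cong refl) auto

lemma P_dist_qf:
  assumes lk: "l \<le> k" and kn: "2 * k \<le> n" and lm: "l \<le> m" and mk: "m + k \<le> n + l"
  shows "P_dist n m k l x = qf (n - k) (m - l) (replicate l True @ replicate (k - l) False) x"
proof -
  let ?a = "replicate l True @ replicate (k - l) False"
  let ?N = "n - k" and ?M = "m - l" and ?D = "dicke (n - k) (m - l)"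
  have la: "length ?a = k" using lk by simp
  have Nk: "?N + length ?a = n" using la kn by simp
  have MN: "?M \<le> ?N" using mk lm lk by linarith
  have lk': "length ?a \<le> ?N" using la kn by simp
  note C = chain[of ?N ?D ?M, OF dicke_eig dicke_supp dicke_norm[OF MN] lk']
  from C obtain w where
    W1: "\<forall>s. length s = ?N + length ?a \<longrightarrow> prep ?a ?D s = (\<Sum>y\<le>length ?a. w y s)"
    and W2: "\<forall>y s. y \<le> length ?a \<longrightarrow> length s = ?N + length ?a \<longrightarrow> transp_sum (?N + length ?a) (w y) s = content_sum (?N + length ?a) y * w y s"
    and W3: "\<forall>y s. w y s \<noteq> 0 \<longrightarrow> length s = ?N + length ?a \<and> count_list s True = ?M + count_list ?a True"
    and W4: "\<forall>y s. length ?a < y \<longrightarrow> w y s = 0"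
    and W5: "\<forall>y. inner_q (?N + length ?a) (prep ?a ?D) (w y) = qf ?N ?M ?a y"
    by blast
  have Xi_eq: "Xi n m k l s = prep ?a ?D s" for s using Xi_prep[OF lk] kn by simp
  have kd: "k \<le> n div 2" using kn by linarith
  show ?thesis
  proof (cases "x \<le> n div 2")
    case True
    have proj: "isotypic_proj n x (Xi n m k l) s = (if x \<in> {..k} then w x s else 0)" if "length s = n" for s
    proof (rule proj_eig[where Y = "{..k}" and w = w])
      show "{..k} \<subseteq> {..n div 2}" using kd by auto
      show "\<And>y s. y \<in> {..k} \<Longrightarrow> length s = n \<Longrightarrow> transp_sum n (w y) s = content_sum n y * w y s"
        using W2[unfolded Nk] la by auto
      show "\<And>s. length s = n \<Longrightarrow> Xi n m k l s = (\<Sum>y\<in>{..k}. w y s)"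
        using W1[unfolded Nk] la unfolding Xi_eq by auto
    qed (use True that in auto)
    have "P_dist n m k l x = inner_q n (prep ?a ?D) (if x \<le> k then w x else (\<lambda>s. 0))"
    proof -
      have "P_dist n m k l x = inner_q n (Xi n m k l) (isotypic_proj n x (Xi n m k l))"
        unfolding P_dist_def using True by simp
      also have "\<dots> = inner_q n (prep ?a ?D) (if x \<le> k then w x else (\<lambda>s. 0))"
        by (rule inner_cong) (auto simp: proj Xi_eq)
      finally show ?thesis .
    qed
    also have "\<dots> = qf ?N ?M ?a x"
    proof (cases "x \<le> k")
      case True then show ?thesis using W5 Nk by simp
    next
      case False then show ?thesis using qf_zero[of ?a x] la by (simp add: inner_q_def)
    qed
    finally show ?thesis .
  next
    case False
    then have "k < x" using kd by simp
    then show ?thesis using False qf_zero[of ?a x] la by (simp add: P_dist_def)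
  qed
qed


lemma als_closed:
  assumes y: "2 * y \<le> n'"
  shows "als b n' r y = (if b then real r - real y + 1 else real n' + 1 - real y - real r) / (real n' + 1 - 2 * real y)"
    and "ali b n' r y = 1 - als b n' r y"
proof -
  have yn: "y \<le> n'" using y by simp
  have num: "aa b n' r y - content_sum (Suc n') (Suc y) = (if b then real r - real y + 1 else real n' + 1 - real y - real r)"
    using yn by (cases b) (simp_all add: aa_def eb_def content_sum_closed power2_eq_square algebra_simps)
  have den: "content_sum (Suc n') y - content_sum (Suc n') (Suc y) = real n' + 1 - 2 * real y" by (rule cs_ne(1)[OF y])
  show "als b n' r y = (if b then real r - real y + 1 else real n' + 1 - real y - real r) / (real n' + 1 - 2 * real y)"
    unfolding als_def num den ..
  define D where "D = content_sum (Suc n') y - content_sum (Suc n') (Suc y)"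
  have D0: "D \<noteq> 0" using cs_ne(2)[OF y] by (simp add: D_def)
  have e1: "content_sum (Suc n') (Suc y) - content_sum (Suc n') y = - D" by (simp add: D_def)
  have e2: "aa b n' r y - content_sum (Suc n') y = (aa b n' r y - content_sum (Suc n') (Suc y)) - D" by (simp add: D_def)
  show "ali b n' r y = 1 - als b n' r y"
    unfolding ali_def als_def e1 e2 D_def[symmetric] using D0 by (simp add: field_simps)
qed

lemma als_bound:
  fixes \<xi> :: real
  assumes xi: "0 \<le> \<xi>" "\<xi> \<le> 1" and y2: "2 * y \<le> n'" and yt: "y \<le> t" and tk: "Suc t \<le> k"
    and n': "n' = N + t" and n: "n = N + k" and M: "real M = \<xi> * real n - real l" and lk: "l \<le> k"
    and cT: "cT \<le> t" and nk: "4 * k \<le> n" and npos: "0 < n"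
  shows "\<bar>als b n' (M + cT) y - (1 - beta \<xi> b)\<bar> \<le> (10 * real k + 2) / real n"
proof -
  define D1 where "D1 = real n' + 1 - 2 * real y"
  define Z where "Z = \<xi> * (real k - real t - 1)"
  define Y2 where "Y2 = \<xi> * real y"
  have D1ge: "D1 \<ge> real n / 2" using y2 yt tk n' n nk unfolding D1_def by simp
  have D1pos: "D1 > 0" using D1ge npos by simp
  have X0: "0 \<le> real k - real t - 1" using tk by linarith
  have "\<xi> * (real k - real t - 1) \<le> 1 * (real k - real t - 1)" by (rule mult_right_mono) (use xi X0 in auto)
  then have Z0: "0 \<le> Z" "Z \<le> real k" unfolding Z_def using xi X0 by auto
  have Y0: "0 \<le> Y2" "Y2 \<le> real y" unfolding Y2_def using xi by (auto intro!: mult_left_le_one_le)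
  have xiD: "\<xi> * D1 = \<xi> * real n - Z - 2 * Y2"
    unfolding D1_def Z_def Y2_def n' n by (simp add: algebra_simps)
  define X where "X = (if b then (real (M + cT) - real y + 1) - \<xi> * D1 else real y - real (M + cT) + \<xi> * D1)"
  have al: "als b n' (M + cT) y = (if b then real (M + cT) - real y + 1 else real n' + 1 - real y - real (M + cT)) / D1"
    unfolding als_closed(1)[OF y2] D1_def ..
  have eq: "als b n' (M + cT) y - (1 - beta \<xi> b) = X / D1"
    unfolding al using D1pos by (cases b) (simp_all add: X_def field_simps D1_def)
  have f: "real l \<le> real k" "real cT \<le> real t" "real t + 1 \<le> real k" "real y \<le> real t" using lk cT tk yt by auto
  have Xb: "\<bar>X\<bar> \<le> 5 * real k + 1"
  proof (cases b)
    case True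
    then have "X = real M + real cT - real y + 1 - \<xi> * D1" unfolding X_def by simp
    then show ?thesis unfolding abs_le_iff using Z0 Y0 xiD M f by (intro conjI) linarith+
  next
    case False
    then have "X = real y - real M - real cT + \<xi> * D1" unfolding X_def by simp
    then show ?thesis unfolding abs_le_iff using Z0 Y0 xiD M f by (intro conjI) linarith+
  qed
  have "\<bar>X / D1\<bar> = \<bar>X\<bar> / D1" using D1pos by simp
  also have "\<dots> \<le> (5 * real k + 1) / D1" using Xb D1pos by (simp add: divide_right_mono)
  also have "\<dots> \<le> (5 * real k + 1) / (real n / 2)"
    using D1ge npos by (intro divide_left_mono) auto
  also have "\<dots> = (10 * real k + 2) / real n" by (simp add: field_simps)
  finally show ?thesis using eq by simp
qed

lemma term_bound:
  fixes A c q p E B :: real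
  assumes "\<bar>A - c\<bar> \<le> B" "B \<le> 1" "0 \<le> c" "c \<le> 1" "\<bar>q - p\<bar> \<le> E" "0 \<le> p" "p \<le> 1"
  shows "\<bar>A * q - c * p\<bar> \<le> 2 * E + B"
proof -
  have A2: "\<bar>A\<bar> \<le> 2" using assms(1-4) by linarith
  have "A * q - c * p = A * (q - p) + (A - c) * p" by (simp add: algebra_simps)
  then have "\<bar>A * q - c * p\<bar> \<le> \<bar>A\<bar> * \<bar>q - p\<bar> + \<bar>A - c\<bar> * p"
    using abs_triangle_ineq[of "A * (q - p)" "(A - c) * p"] assms(6) by (simp add: abs_mult)
  also have "\<dots> \<le> 2 * E + B * 1"
    using assms A2 by (intro add_mono mult_mono) auto
  finally show ?thesis by simp
qed

lemma err:
  fixes \<xi> :: real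
  assumes xi: "0 \<le> \<xi>" "\<xi> \<le> 1" and n: "n = N + k" and M: "real M = \<xi> * real n - real l" and lk: "l \<le> k"
    and nK: "10 * k + 2 \<le> n"
  shows "length a \<le> k \<Longrightarrow> \<bar>qf N M a y - pmf (LC \<xi> a) y\<bar> \<le> (4 ^ length a - 1) * (10 * real k + 2) / real n"
proof (induction a arbitrary: y)
  case Nil then show ?case by (simp add: pmf_return indicator_def)
next
  case (Cons b a)
  define t where "t = length a"
  define n' where "n' = N + t"
  define r where "r = M + count_list a True"
  define K where "K = (10 * real k + 2) / real n"
  define E where "E = (4 ^ t - 1) * (10 * real k + 2) / real n"
  have npos: "0 < n" using nK by simp
  have tk: "Suc t \<le> k" using Cons.prems by (simp add: t_def)
  have K1: "K \<le> 1" "0 \<le> K" unfolding K_def using nK npos by (auto simp: field_simps)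
  have E0: "0 \<le> E" unfolding E_def by (auto intro!: divide_nonneg_pos mult_nonneg_nonneg simp: npos)
  have IH: "\<bar>qf N M a z - pmf (LC \<xi> a) z\<bar> \<le> E" for z
    using Cons.IH[of z] Cons.prems by (simp add: E_def t_def)
  have c01: "0 \<le> beta \<xi> b" "beta \<xi> b \<le> 1" using beta_range[OF xi] by auto
  have p01: "0 \<le> pmf (LC \<xi> a) z" "pmf (LC \<xi> a) z \<le> 1" for z by (simp_all add: pmf_le_1)
  have cT: "count_list a True \<le> t" unfolding t_def by (rule count_le_length)
  have y2: "2 * z \<le> n'" if "z \<le> t" for z using that tk nK n unfolding n'_def by linarith
  have AB: "\<bar>als b n' r z - (1 - beta \<xi> b)\<bar> \<le> K" if "z \<le> t" for z
    unfolding K_def r_def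
    by (rule als_bound[OF xi y2[OF that] that tk n'_def n M lk cT]) (use nK in auto)
  have T1: "\<bar>als b n' r z * qf N M a z - (1 - beta \<xi> b) * pmf (LC \<xi> a) z\<bar> \<le> 2 * E + K" for z
  proof (cases "z \<le> t")
    case True then show ?thesis using c01 p01 IH K1 AB by (intro term_bound) auto
  next
    case False then have "qf N M a z = 0" "pmf (LC \<xi> a) z = 0"
      using qf_zero LC_zero[OF xi] by (auto simp: t_def)
    then show ?thesis using E0 K1 by simp
  qed
  have T2: "\<bar>ali b n' r z * qf N M a z - beta \<xi> b * pmf (LC \<xi> a) z\<bar> \<le> 2 * E + K" for z
  proof (cases "z \<le> t")
    case True
    have e: "ali b n' r z - beta \<xi> b = -(als b n' r z - (1 - beta \<xi> b))"
      using als_closed(2)[OF y2[OF True]] by simp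
    have "\<bar>ali b n' r z - beta \<xi> b\<bar> \<le> K"
      unfolding e abs_minus_cancel by (rule AB[OF True])
    then show ?thesis using c01 p01 IH K1 by (intro term_bound) auto
  next
    case False then have "qf N M a z = 0" "pmf (LC \<xi> a) z = 0"
      using qf_zero LC_zero[OF xi] by (auto simp: t_def)
    then show ?thesis using E0 K1 by simp
  qed
  have qf_eq: "qf N M (b#a) y = als b n' r y * qf N M a y + (if 0 < y then ali b n' r (y - 1) * qf N M a (y - 1) else 0)"
    by (simp add: n'_def r_def t_def)
  have pm_eq: "pmf (LC \<xi> (b#a)) y = (1 - beta \<xi> b) * pmf (LC \<xi> a) y + (if 0 < y then beta \<xi> b * pmf (LC \<xi> a) (y - 1) else 0)"
    by (rule pmf_LC_Cons[OF xi])
  have "\<bar>qf N M (b#a) y - pmf (LC \<xi> (b#a)) y\<bar> \<le> (2 * E + K) + (2 * E + K)"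
  proof (cases "0 < y")
    case True
    then show ?thesis unfolding qf_eq pm_eq using T1[of y] T2[of "y - 1"] by (simp add: abs_le_iff)
  next
    case False
    then show ?thesis unfolding qf_eq pm_eq using T1[of y] E0 K1 by simp
  qed
  also have "\<dots> \<le> (4 ^ length (b#a) - 1) * (10 * real k + 2) / real n"
  proof -
    have "(2 * E + K) + (2 * E + K) = (4 * 4 ^ t - 2) * (10 * real k + 2) / real n"
      unfolding E_def K_def using npos by (simp add: field_simps)
    also have "\<dots> \<le> (4 * 4 ^ t - 1) * (10 * real k + 2) / real n"
      using npos by (intro divide_right_mono mult_right_mono) auto
    finally show ?thesis by (simp add: t_def)
  qed
  finally show ?case .
qed

theorem main_bound:
  fixes k l :: nat and \<xi> :: real
  assumes "0 \<le> \<xi>" and "\<xi> \<le> 1" and "l \<le> k"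
  shows "\<exists>C N0. \<forall>n m x. n \<ge> N0 \<and> real m = \<xi> * real n \<and> k \<le> n \<and> l \<le> m \<and> m + k \<le> n + l
             \<longrightarrow> \<bar>P_dist n m k l x - pmf (P_R \<xi> k l) x\<bar> \<le> C / real n"
proof (intro exI allI impI)
  fix n m x
  assume h: "10 * k + 2 \<le> n \<and> real m = \<xi> * real n \<and> k \<le> n \<and> l \<le> m \<and> m + k \<le> n + l"
  let ?a = "replicate l True @ replicate (k - l) False"
  have kn: "2 * k \<le> n" using h by linarith
  have P: "P_dist n m k l x = qf (n - k) (m - l) ?a x"
    by (rule P_dist_qf) (use h assms kn in auto)
  have R: "pmf (P_R \<xi> k l) x = pmf (LC \<xi> ?a) x" using P_R_LC[OF assms(1,2)] by simp
  have la: "length ?a = k" using assms(3) by simp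
  have M: "real (m - l) = \<xi> * real n - real l" using h by (simp add: of_nat_diff)
  have "\<bar>qf (n - k) (m - l) ?a x - pmf (LC \<xi> ?a) x\<bar> \<le> (4 ^ length ?a - 1) * (10 * real k + 2) / real n"
    by (rule err[OF assms(1,2) _ M assms(3)]) (use h la in auto)
  also have "\<dots> \<le> 4 ^ k * (10 * real k + 2) / real n"
    using la by (intro divide_right_mono mult_right_mono) auto
  finally show "\<bar>P_dist n m k l x - pmf (P_R \<xi> k l) x\<bar> \<le> 4 ^ k * (10 * real k + 2) / real n"
    unfolding P R .
qed


theorem theorem5p1:
  fixes k l :: nat and \<xi> :: real
  assumes "0 \<le> \<xi>" and "\<xi> \<le> 1" and "l \<le> k"
  shows "(\<exists>C N0. \<forall>n m x. n \<ge> N0 \<and> real m = \<xi> * real n \<and> k \<le> n \<and> l \<le> m \<and> m + k \<le> n + l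
             \<longrightarrow> \<bar>P_dist n m k l x - pmf (P_R \<xi> k l) x\<bar> \<le> C / real n)
       \<and> set_pmf (P_R \<xi> k l) \<subseteq> {0..k}
       \<and> measure_pmf.expectation (P_R \<xi> k l) real = real (k - l) * \<xi> + real l * (1 - \<xi>)
       \<and> measure_pmf.variance (P_R \<xi> k l) real = real k * \<xi> * (1 - \<xi>)"
proof -
  have A: "\<exists>C N0. \<forall>n m x. n \<ge> N0 \<and> real m = \<xi> * real n \<and> k \<le> n \<and> l \<le> m \<and> m + k \<le> n + l
             \<longrightarrow> \<bar>P_dist n m k l x - pmf (P_R \<xi> k l) x\<bar> \<le> C / real n"
    by (rule main_bound[OF assms])
  have B: "set_pmf (P_R \<xi> k l) \<subseteq> {0..k}
       \<and> measure_pmf.expectation (P_R \<xi> k l) real = real (k - l) * \<xi> + real l * (1 - \<xi>)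
       \<and> measure_pmf.variance (P_R \<xi> k l) real = real k * \<xi> * (1 - \<xi>)"
    by (rule P_R_facts[OF assms])
  from A B show ?thesis by blast
qed

end
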